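(* Let $(\mathcal{S},\mathcal{A})$ be a finite directed acyclic graph with unique initial state $s_0$ and unique sink state $s_f$. For $i\in\{1,\dots,k\}$ let $p_{i,F}$ be a forward policy on this graph with partition function $Z_i>0$ and reaching probability $u_i$. Let $\omega_1,\dots,\omega_k\ge0$, set $v_i=\omega_iZ_i/\sum_{j=1}^k\omega_jZ_j$, $u_M(s)=\sum_{i=1}^k v_iu_i(s)$, and $$p_{M,F}(s'\mid s)=\sum_{i=1}^k\frac{v_iu_i(s)}{u_M(s)}\,p_{i,F}(s'\mid s)\quad\text{for all } s\in\mathcal{S}\setminus\{s_f\}.$$ Then $u_M$ coincides with the reaching probability induced by $p_{M,F}$: $u_M(s_0)=1$ and $u_M(s)=\sum_{s_*:(s_*\to s)\in\mathcal{A}}u_M(s_* )\,p_{M,F}(s\mid s_* )$ for all $s\in\mathcal{S}\setminus\{s_0\}$.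
   Context: A forward policy $p_F$ assigns to each state $s\neq s_f$ a probability distribution $p_F(\cdot\mid s)$ over the children $s'$ of $s$ (states with $(s\to s')\in\mathcal{A}$). Its reaching probability $u$ is defined by $u(s_0)=1$ and $u(s)=\sum_{s_*:(s_*\to s)\in\mathcal{A}}u(s_* )p_F(s\mid s_* )$ for $s\neq s_0$, i.e. the probability that a trajectory sampled from $p_F$ starting at $s_0$ visits $s$. *)

theory Defs
  imports Complex_Main
begin

definition pointed_dag :: "'a set \<Rightarrow> ('a \<times> 'a) set \<Rightarrow> 'a \<Rightarrow> 'a \<Rightarrow> bool" where
  "pointed_dag S A s0 sf \<longleftrightarrow>
     finite S \<and> A \<subseteq> S \<times> S \<and> acyclic A \<and> s0 \<in> S \<and> sf \<in> S \<and>
     (\<forall>s\<in>S. (\<nexists>s'. (s', s) \<in> A) \<longleftrightarrow> s = s0) \<and>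
     (\<forall>s\<in>S. (\<nexists>s'. (s, s') \<in> A) \<longleftrightarrow> s = sf)"

definition children :: "('a \<times> 'a) set \<Rightarrow> 'a \<Rightarrow> 'a set" where
  "children A s = {s'. (s, s') \<in> A}"

definition parents :: "('a \<times> 'a) set \<Rightarrow> 'a \<Rightarrow> 'a set" where
  "parents A s = {s'. (s', s) \<in> A}"

definition forward_policy :: "'a set \<Rightarrow> ('a \<times> 'a) set \<Rightarrow> 'a \<Rightarrow> ('a \<Rightarrow> 'a \<Rightarrow> real) \<Rightarrow> bool" where
  "forward_policy S A sf p \<longleftrightarrow>
     (\<forall>s\<in>S - {sf}. (\<forall>s'\<in>children A s. 0 \<le> p s s') \<and> (\<Sum>s'\<in>children A s. p s s') = 1)"

definition reaching_prob :: "'a set \<Rightarrow> ('a \<times> 'a) set \<Rightarrow> 'a \<Rightarrow> ('a \<Rightarrow> 'a \<Rightarrow> real) \<Rightarrow> ('a \<Rightarrow> real) \<Rightarrow> bool" where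
  "reaching_prob S A s0 p u \<longleftrightarrow>
     u s0 = 1 \<and> (\<forall>s\<in>S - {s0}. u s = (\<Sum>s'\<in>parents A s. u s' * p s' s))"

end

theory Submission
  imports Defs
begin

lemma u_nonneg:
  assumes dag: "pointed_dag S A s0 sf"
    and pol: "forward_policy S A sf p"
    and reach: "reaching_prob S A s0 p u"
  shows "s \<in> S \<Longrightarrow> u s \<ge> 0"
proof -
  have fin: "finite A" using dag unfolding pointed_dag_def
    by (meson finite_SigmaI finite_subset)
  have wf: "wf A" using dag fin finite_acyclic_wf unfolding pointed_dag_def by blast
  show "s \<in> S \<Longrightarrow> u s \<ge> 0"
  proof (induction s rule: wf_induct[OF wf])
    case (1 x)
    show ?case
    proof (cases "x = s0")
      case True then show ?thesis using reach unfolding reaching_prob_def by simp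
    next
      case False
      have eq: "u x = (\<Sum>s'\<in>parents A x. u s' * p s' x)"
        using reach False 1(2) unfolding reaching_prob_def by blast
      have "(\<Sum>s'\<in>parents A x. u s' * p s' x) \<ge> 0"
      proof (rule sum_nonneg)
        fix y assume y: "y \<in> parents A x"
        hence yA: "(y, x) \<in> A" by (simp add: parents_def)
        hence yS: "y \<in> S" using dag unfolding pointed_dag_def by blast
        have "y \<noteq> sf" using dag yA yS unfolding pointed_dag_def by blast
        hence "p y x \<ge> 0" using pol yS yA unfolding forward_policy_def children_def by blast
        moreover have "u y \<ge> 0" using 1(1) yA yS by blast
        ultimately show "u y * p y x \<ge> 0" by simp
      qed
      then show ?thesis using eq by simp
    qed
  qed
qed

theorem lemmaA2:
  fixes S :: "'a set" and A :: "('a \<times> 'a) set" and s0 sf :: 'a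
    and k :: nat and pF :: "nat \<Rightarrow> 'a \<Rightarrow> 'a \<Rightarrow> real" and u :: "nat \<Rightarrow> 'a \<Rightarrow> real"
    and Z \<omega> v :: "nat \<Rightarrow> real" and uM :: "'a \<Rightarrow> real" and pM :: "'a \<Rightarrow> 'a \<Rightarrow> real"
  assumes dag: "pointed_dag S A s0 sf"
    and pol: "\<forall>i\<in>{1..k}. forward_policy S A sf (pF i)"
    and reach: "\<forall>i\<in>{1..k}. reaching_prob S A s0 (pF i) (u i)"
    and Zpos: "\<forall>i\<in>{1..k}. Z i > 0"
    and \<omega>nn: "\<forall>i\<in>{1..k}. \<omega> i \<ge> 0"
    and nondeg: "(\<Sum>j=1..k. \<omega> j * Z j) > 0"
    and v_def: "\<forall>i\<in>{1..k}. v i = \<omega> i * Z i / (\<Sum>j=1..k. \<omega> j * Z j)"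
    and uM_def: "\<forall>s. uM s = (\<Sum>i=1..k. v i * u i s)"
    and pM_def: "\<forall>s\<in>S - {sf}. \<forall>s'. pM s s' = (\<Sum>i=1..k. v i * u i s / uM s * pF i s s')"
  shows "uM s0 = 1 \<and> (\<forall>s\<in>S - {s0}. uM s = (\<Sum>s'\<in>parents A s. uM s' * pM s' s))"
proof
  let ?W = "\<Sum>j=1..k. \<omega> j * Z j"
  have vnn: "\<forall>i\<in>{1..k}. v i \<ge> 0" using v_def \<omega>nn Zpos nondeg
    by (metis divide_nonneg_pos less_imp_le mult_nonneg_nonneg)
  have u0: "\<forall>i\<in>{1..k}. u i s0 = 1" using reach unfolding reaching_prob_def by blast
  have "uM s0 = (\<Sum>i=1..k. v i)" using uM_def u0 by simp
  also have "\<dots> = (\<Sum>i=1..k. \<omega> i * Z i / ?W)" using v_def by simp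
  also have "\<dots> = ?W / ?W" by (rule sum_divide_distrib[symmetric])
  also have "\<dots> = 1" using nondeg by simp
  finally show "uM s0 = 1" .
  show "\<forall>s\<in>S - {s0}. uM s = (\<Sum>s'\<in>parents A s. uM s' * pM s' s)"
  proof
    fix s assume s: "s \<in> S - {s0}"
    have finS: "finite S" using dag unfolding pointed_dag_def by blast
    have parS: "parents A s \<subseteq> S" using dag unfolding pointed_dag_def parents_def by blast
    hence finP: "finite (parents A s)" using finS finite_subset by blast
    have key: "uM y * pM y s = (\<Sum>i=1..k. v i * (u i y * pF i y s))" if y: "y \<in> parents A s" for y
    proof -
      have yA: "(y, s) \<in> A" using y by (simp add: parents_def)
      have yS: "y \<in> S" using y parS by blast
      have ysf: "y \<noteq> sf" using dag yA yS unfolding pointed_dag_def by blast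
      have pM_eq: "pM y s = (\<Sum>i=1..k. v i * u i y / uM y * pF i y s)" using pM_def yS ysf by blast
      show ?thesis
      proof (cases "uM y = 0")
        case False
        have "uM y * pM y s = (\<Sum>i=1..k. uM y * (v i * u i y / uM y * pF i y s))"
          using pM_eq by (simp add: sum_distrib_left)
        also have "\<dots> = (\<Sum>i=1..k. v i * (u i y * pF i y s))"
          using False by (intro sum.cong) auto
        finally show ?thesis .
      next
        case True
        have nn: "\<forall>i\<in>{1..k}. v i * u i y \<ge> 0"
          using vnn u_nonneg[OF dag _ _ yS] pol reach by (meson mult_nonneg_nonneg)
        have "(\<Sum>i=1..k. v i * u i y) = 0" using True uM_def by simp
        hence z: "\<forall>i\<in>{1..k}. v i * u i y = 0" using nn sum_nonneg_eq_0_iff[of "{1..k}" "\<lambda>i. v i * u i y"] by simp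
        have "(\<Sum>i=1..k. v i * (u i y * pF i y s)) = 0"
          by (rule sum.neutral) (use z in \<open>simp add: mult.assoc[symmetric]\<close>)
        then show ?thesis using True by simp
      qed
    qed
    have "uM s = (\<Sum>i=1..k. v i * (\<Sum>y\<in>parents A s. u i y * pF i y s))"
      using uM_def reach s unfolding reaching_prob_def by simp
    also have "\<dots> = (\<Sum>i=1..k. \<Sum>y\<in>parents A s. v i * (u i y * pF i y s))"
      by (simp add: sum_distrib_left)
    also have "\<dots> = (\<Sum>y\<in>parents A s. \<Sum>i=1..k. v i * (u i y * pF i y s))"
      by (rule sum.swap)
    also have "\<dots> = (\<Sum>y\<in>parents A s. uM y * pM y s)"
      using key by simp
    finally show "uM s = (\<Sum>s'\<in>parents A s. uM s' * pM s' s)" .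
  qed
qed

end
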